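(* Let $(\mathcal S,\mathcal A,P,R,d_0)$ be a finite episodic MDP with horizon $T$ and $\pi_\theta$ a parameterized policy satisfying the score bound described in the context. Then there exists a finite constant $L_d$ such that for all $s\in\mathcal S$ (and all $\theta$), $$\Big\|\frac{\partial}{\partial\theta}\sum_{t=1}^{T-1}\Pr(S_t=s\mid\pi=\pi_\theta)\Big\|\le L_d.$$
   Context: Setting: $\mathcal S$ is a finite set of states, $\mathcal A$ a finite set of actions, $P(s'\mid s,a)$ a transition function, $d_0$ an initial state distribution. An episode runs as follows: $S_0\sim d_0$; at each time $t$, $A_t\sim\pi_\theta(\cdot\mid S_t)$, $S_{t+1}\sim P(\cdot\mid S_t,A_t)$; the horizon is $T$. The policy $\pi_\theta(a\mid s)$ is positive and differentiable in $\theta\in\mathbb R^n$, and there is a constant $L_\pi$ such that for all $\theta$, $s\in\mathcal S$, $a\in\mathcal A$: $\big\|\frac{\partial}{\partial\theta}\ln\pi_\theta(a\mid s)\big\|\le L_\pi$. *)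

theory Defs
  imports "HOL-Analysis.Analysis"
begin

text \<open>Marginal state distribution Pr(S_t = s | \<pi>) of the Markov chain generated by
  initial distribution d0, policy \<pi> (\<pi> s a = probability of action a in state s)
  and transition kernel P (P s a s' = probability of s' after action a in s).\<close>
fun state_dist :: "('s::finite \<Rightarrow> real) \<Rightarrow> ('s \<Rightarrow> 'a::finite \<Rightarrow> 's \<Rightarrow> real)
    \<Rightarrow> ('s \<Rightarrow> 'a \<Rightarrow> real) \<Rightarrow> nat \<Rightarrow> 's \<Rightarrow> real" where
  "state_dist d0 P \<pi> 0 s = d0 s"
| "state_dist d0 P \<pi> (Suc t) s' =
     (\<Sum>s\<in>UNIV. \<Sum>a\<in>UNIV. state_dist d0 P \<pi> t s * \<pi> s a * P s a s')"

end

theory Submission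
  imports Defs
begin

lemma grad_rep:
  fixes f :: "'b::euclidean_space \<Rightarrow> real"
  assumes "linear f"
  shows "f h = (\<Sum>b\<in>Basis. f b *\<^sub>R b) \<bullet> h"
proof -
  have "f h = f (\<Sum>b\<in>Basis. (h \<bullet> b) *\<^sub>R b)" by (simp add: euclidean_representation)
  also have "\<dots> = (\<Sum>b\<in>Basis. (h \<bullet> b) * f b)"
    using assms by (simp add: linear_sum linear_cmul)
  also have "\<dots> = (\<Sum>b\<in>Basis. f b * (b \<bullet> h))"
    by (rule sum.cong[OF refl]) (simp add: inner_commute)
  also have "\<dots> = (\<Sum>b\<in>Basis. f b *\<^sub>R b) \<bullet> h"
    by (simp add: inner_sum_left)
  finally show ?thesis .
qed

lemma has_grad:
  fixes f :: "'b::euclidean_space \<Rightarrow> real"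
  assumes "f differentiable (at x)"
  shows "\<exists>g. (f has_derivative (\<lambda>h. g \<bullet> h)) (at x)"
proof -
  obtain D where D: "(f has_derivative D) (at x)" using assms unfolding differentiable_def by blast
  then have "linear D" using has_derivative_linear by blast
  then have "D = (\<lambda>h. (\<Sum>b\<in>Basis. D b *\<^sub>R b) \<bullet> h)" using grad_rep by blast
  then show ?thesis using D by metis
qed

lemma swap3:
  fixes X :: "'s \<Rightarrow> 'a \<Rightarrow> 's \<Rightarrow> real"
  shows "(\<Sum>s'\<in>A. \<Sum>s\<in>B. \<Sum>a\<in>C. X s a s') = (\<Sum>s\<in>B. \<Sum>a\<in>C. \<Sum>s'\<in>A. X s a s')"
  by (subst sum.swap, rule sum.cong[OF refl], rule sum.swap)

lemma sd_prob:
  fixes d0 :: "'s::finite \<Rightarrow> real"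
    and P :: "'s \<Rightarrow> 'a::finite \<Rightarrow> 's \<Rightarrow> real"
    and p :: "'s \<Rightarrow> 'a \<Rightarrow> real"
  assumes d0_nonneg: "\<And>s. d0 s \<ge> 0" and d0_sum: "(\<Sum>s\<in>UNIV. d0 s) = 1"
    and P_nonneg: "\<And>s a s'. P s a s' \<ge> 0"
    and P_sum: "\<And>s a. (\<Sum>s'\<in>UNIV. P s a s') = 1"
    and pi_pos: "\<And>s a. p s a \<ge> 0"
    and pi_sum: "\<And>s. (\<Sum>a\<in>UNIV. p s a) = 1"
  shows "(\<forall>s. state_dist d0 P p t s \<ge> 0) \<and> (\<Sum>s\<in>UNIV. state_dist d0 P p t s) = 1"
proof (induction t)
  case 0
  then show ?case using assms by simp
next
  case (Suc t)
  have A: "\<forall>s. state_dist d0 P p (Suc t) s \<ge> 0"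
    using Suc assms by (simp add: sum_nonneg)
  have "(\<Sum>s'\<in>UNIV. state_dist d0 P p (Suc t) s') =
     (\<Sum>s\<in>UNIV. \<Sum>a\<in>UNIV. state_dist d0 P p t s * p s a * (\<Sum>s'\<in>UNIV. P s a s'))"
    by (simp only: state_dist.simps swap3 sum_distrib_left)
  also have "\<dots> = (\<Sum>s\<in>UNIV. state_dist d0 P p t s * (\<Sum>a\<in>UNIV. p s a))"
    by (simp add: P_sum sum_distrib_left)
  also have "\<dots> = 1" using Suc pi_sum by simp
  finally show ?case using A by simp
qed

theorem corollary2:
  fixes d0 :: "'s::finite \<Rightarrow> real"
    and P :: "'s \<Rightarrow> 'a::finite \<Rightarrow> 's \<Rightarrow> real"
    and \<pi> :: "real ^ 'n \<Rightarrow> 's \<Rightarrow> 'a \<Rightarrow> real"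
    and T :: nat and L_pi :: real
  assumes d0_nonneg: "\<And>s. d0 s \<ge> 0" and d0_sum: "(\<Sum>s\<in>UNIV. d0 s) = 1"
    and P_nonneg: "\<And>s a s'. P s a s' \<ge> 0"
    and P_sum: "\<And>s a. (\<Sum>s'\<in>UNIV. P s a s') = 1"
    and pi_pos: "\<And>\<theta> s a. \<pi> \<theta> s a > 0"
    and pi_sum: "\<And>\<theta> s. (\<Sum>a\<in>UNIV. \<pi> \<theta> s a) = 1"
    and pi_diff: "\<And>\<theta> s a. (\<lambda>\<theta>'. \<pi> \<theta>' s a) differentiable (at \<theta>)"
    and score_bound: "\<And>\<theta> s a g. ((\<lambda>\<theta>'. ln (\<pi> \<theta>' s a)) has_derivative (\<lambda>h. g \<bullet> h)) (at \<theta>)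
                        \<Longrightarrow> norm g \<le> L_pi"
  shows "\<exists>L_d. \<forall>s \<theta>. \<exists>g.
           ((\<lambda>\<theta>'. \<Sum>t=1..T-1. state_dist d0 P (\<pi> \<theta>') t s) has_derivative (\<lambda>h. g \<bullet> h)) (at \<theta>)
           \<and> norm g \<le> L_d"
proof (rule exI[of _ "\<Sum>t=1..T-1. real t * L_pi"], intro allI)
  fix s :: 's and \<theta> :: "real ^ 'n"
  have "\<forall>s a. \<exists>g. ((\<lambda>\<theta>'. \<pi> \<theta>' s a) has_derivative (\<lambda>h. g \<bullet> h)) (at \<theta>)"
    using has_grad pi_diff by blast
  then obtain gp where gp: "\<And>s a. ((\<lambda>\<theta>'. \<pi> \<theta>' s a) has_derivative (\<lambda>h. gp s a \<bullet> h)) (at \<theta>)"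
    by metis
  have gp_bound: "norm (gp s a) \<le> \<pi> \<theta> s a * L_pi" for s a
  proof -
    have pos: "\<pi> \<theta> s a > 0" by (rule pi_pos)
    have "((\<lambda>\<theta>'. ln (\<pi> \<theta>' s a)) has_derivative (\<lambda>h. (gp s a \<bullet> h) * inverse (\<pi> \<theta> s a))) (at \<theta>)"
      by (rule DERIV_compose_FDERIV[OF DERIV_ln[OF pos] gp])
    moreover have "(\<lambda>h. (gp s a \<bullet> h) * inverse (\<pi> \<theta> s a)) = (\<lambda>h. (inverse (\<pi> \<theta> s a) *\<^sub>R gp s a) \<bullet> h)"
      by (simp add: mult.commute)
    ultimately have "norm (inverse (\<pi> \<theta> s a) *\<^sub>R gp s a) \<le> L_pi"
      using score_bound by metis
    then have "norm (gp s a) / \<pi> \<theta> s a \<le> L_pi" using pos by (simp add: divide_inverse mult.commute)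
    then show ?thesis using pos by (simp add: divide_le_eq mult.commute)
  qed
  have prob: "\<And>t. (\<forall>s. state_dist d0 P (\<pi> \<theta>) t s \<ge> 0) \<and> (\<Sum>s\<in>UNIV. state_dist d0 P (\<pi> \<theta>) t s) = 1"
    by (rule sd_prob[OF d0_nonneg d0_sum P_nonneg P_sum less_imp_le[OF pi_pos] pi_sum])
  have main: "\<exists>G. (\<forall>s. ((\<lambda>\<theta>'. state_dist d0 P (\<pi> \<theta>') t s) has_derivative (\<lambda>h. G s \<bullet> h)) (at \<theta>))
          \<and> (\<Sum>s\<in>UNIV. norm (G s)) \<le> real t * L_pi" for t
  proof (induction t)
    case 0
    show ?case by (intro exI[of _ "\<lambda>_. 0"]) simp
  next
    case (Suc t)
    then obtain G where G: "\<And>s. ((\<lambda>\<theta>'. state_dist d0 P (\<pi> \<theta>') t s) has_derivative (\<lambda>h. G s \<bullet> h)) (at \<theta>)"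
      and Gb: "(\<Sum>s\<in>UNIV. norm (G s)) \<le> real t * L_pi" by blast
    define sd where "sd = state_dist d0 P (\<pi> \<theta>) t"
    define G' where "G' s' = (\<Sum>s\<in>UNIV. \<Sum>a\<in>UNIV. P s a s' *\<^sub>R (\<pi> \<theta> s a *\<^sub>R G s + sd s *\<^sub>R gp s a))" for s'
    have D: "((\<lambda>\<theta>'. state_dist d0 P (\<pi> \<theta>') (Suc t) s') has_derivative (\<lambda>h. G' s' \<bullet> h)) (at \<theta>)" for s'
    proof -
      have "((\<lambda>\<theta>'. \<Sum>s\<in>UNIV. \<Sum>a\<in>UNIV. state_dist d0 P (\<pi> \<theta>') t s * \<pi> \<theta>' s a * P s a s')
         has_derivative (\<lambda>h. \<Sum>s\<in>UNIV. \<Sum>a\<in>UNIV. (sd s * (gp s a \<bullet> h) + (G s \<bullet> h) * \<pi> \<theta> s a) * P s a s')) (at \<theta>)"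
        unfolding sd_def
        by (intro has_derivative_sum has_derivative_mult_left has_derivative_mult G gp)
      moreover have "(\<lambda>h. \<Sum>s\<in>UNIV. \<Sum>a\<in>UNIV. (sd s * (gp s a \<bullet> h) + (G s \<bullet> h) * \<pi> \<theta> s a) * P s a s') = (\<lambda>h. G' s' \<bullet> h)"
        unfolding G'_def by (simp add: inner_sum_left algebra_simps)
      ultimately show ?thesis by simp
    qed
    have "(\<Sum>s'\<in>UNIV. norm (G' s')) \<le> (\<Sum>s'\<in>UNIV. \<Sum>s\<in>UNIV. \<Sum>a\<in>UNIV. P s a s' * (\<pi> \<theta> s a * norm (G s) + sd s * norm (gp s a)))"
    proof (rule sum_mono)
      fix s' 
      have "norm (G' s') \<le> (\<Sum>s\<in>UNIV. norm (\<Sum>a\<in>UNIV. P s a s' *\<^sub>R (\<pi> \<theta> s a *\<^sub>R G s + sd s *\<^sub>R gp s a)))"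
        unfolding G'_def by (rule norm_sum)
      also have "\<dots> \<le> (\<Sum>s\<in>UNIV. \<Sum>a\<in>UNIV. norm (P s a s' *\<^sub>R (\<pi> \<theta> s a *\<^sub>R G s + sd s *\<^sub>R gp s a)))"
        by (intro sum_mono norm_sum)
      also have "\<dots> \<le> (\<Sum>s\<in>UNIV. \<Sum>a\<in>UNIV. P s a s' * (\<pi> \<theta> s a * norm (G s) + sd s * norm (gp s a)))"
      proof (intro sum_mono)
        fix s a
        have "norm (\<pi> \<theta> s a *\<^sub>R G s + sd s *\<^sub>R gp s a) \<le> norm (\<pi> \<theta> s a *\<^sub>R G s) + norm (sd s *\<^sub>R gp s a)"
          by (rule norm_triangle_ineq)
        also have "\<dots> = \<pi> \<theta> s a * norm (G s) + sd s * norm (gp s a)"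
          using pi_pos[of \<theta> s a] prob[of t] unfolding sd_def by simp
        finally show "norm (P s a s' *\<^sub>R (\<pi> \<theta> s a *\<^sub>R G s + sd s *\<^sub>R gp s a)) \<le> P s a s' * (\<pi> \<theta> s a * norm (G s) + sd s * norm (gp s a))"
          using P_nonneg[of s a s'] by (simp add: mult_left_mono)
      qed
      finally show "norm (G' s') \<le> (\<Sum>s\<in>UNIV. \<Sum>a\<in>UNIV. P s a s' * (\<pi> \<theta> s a * norm (G s) + sd s * norm (gp s a)))" .
    qed
    also have "\<dots> = (\<Sum>s\<in>UNIV. \<Sum>a\<in>UNIV. (\<Sum>s'\<in>UNIV. P s a s') * (\<pi> \<theta> s a * norm (G s) + sd s * norm (gp s a)))"
      by (simp only: swap3 sum_distrib_right)
    also have "\<dots> = (\<Sum>s\<in>UNIV. \<Sum>a\<in>UNIV. \<pi> \<theta> s a * norm (G s) + sd s * norm (gp s a))"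
      by (simp add: P_sum)
    also have "\<dots> = (\<Sum>s\<in>UNIV. norm (G s)) + (\<Sum>s\<in>UNIV. \<Sum>a\<in>UNIV. sd s * norm (gp s a))"
      by (simp add: sum.distrib sum_distrib_right[symmetric] pi_sum)
    also have "\<dots> \<le> real t * L_pi + (\<Sum>s\<in>UNIV. \<Sum>a\<in>UNIV. sd s * (\<pi> \<theta> s a * L_pi))"
      using Gb prob[of t] gp_bound unfolding sd_def
      by (intro add_mono sum_mono mult_left_mono) auto
    also have "(\<Sum>s\<in>UNIV. \<Sum>a\<in>UNIV. sd s * (\<pi> \<theta> s a * L_pi)) = L_pi"
    proof -
      have "(\<Sum>s\<in>UNIV. \<Sum>a\<in>UNIV. sd s * (\<pi> \<theta> s a * L_pi)) = (\<Sum>s\<in>UNIV. sd s * (\<Sum>a\<in>UNIV. \<pi> \<theta> s a) * L_pi)"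
        by (simp add: sum_distrib_left sum_distrib_right mult.assoc)
      also have "\<dots> = (\<Sum>s\<in>UNIV. sd s) * L_pi" by (simp add: pi_sum sum_distrib_right)
      also have "\<dots> = L_pi" using prob[of t] unfolding sd_def by simp
      finally show ?thesis .
    qed
    finally have "(\<Sum>s'\<in>UNIV. norm (G' s')) \<le> real (Suc t) * L_pi" by (simp add: algebra_simps)
    then show ?case using D by blast
  qed
  then obtain G where G: "\<And>t s. ((\<lambda>\<theta>'. state_dist d0 P (\<pi> \<theta>') t s) has_derivative (\<lambda>h. G t s \<bullet> h)) (at \<theta>)"
    and Gb: "\<And>t. (\<Sum>s\<in>UNIV. norm (G t s)) \<le> real t * L_pi" by metis
  have Gs: "norm (G t s) \<le> real t * L_pi" for t
  proof -
    have "norm (G t s) \<le> (\<Sum>s\<in>UNIV. norm (G t s))"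
      by (rule member_le_sum) auto
    then show ?thesis using Gb[of t] by linarith
  qed
  have "((\<lambda>\<theta>'. \<Sum>t=1..T-1. state_dist d0 P (\<pi> \<theta>') t s) has_derivative (\<lambda>h. (\<Sum>t=1..T-1. G t s) \<bullet> h)) (at \<theta>)"
  proof -
    have "((\<lambda>\<theta>'. \<Sum>t=1..T-1. state_dist d0 P (\<pi> \<theta>') t s) has_derivative (\<lambda>h. \<Sum>t=1..T-1. G t s \<bullet> h)) (at \<theta>)"
      by (intro has_derivative_sum G)
    then show ?thesis by (simp add: inner_sum_left)
  qed
  moreover have "norm (\<Sum>t=1..T-1. G t s) \<le> (\<Sum>t=1..T-1. real t * L_pi)"
    using norm_sum[of "\<lambda>t. G t s" "{1..T-1}"] sum_mono[of "{1..T-1}" "\<lambda>t. norm (G t s)", OF Gs] by linarith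
  ultimately show "\<exists>g. ((\<lambda>\<theta>'. \<Sum>t=1..T-1. state_dist d0 P (\<pi> \<theta>') t s) has_derivative (\<lambda>h. g \<bullet> h)) (at \<theta>)
           \<and> norm g \<le> (\<Sum>t=1..T-1. real t * L_pi)" by blast
qed

end
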